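(* Let $0<a,b<1$, $r>as$, $s>br$, let $(\xi_n)$, $(\chi_n)$ satisfy Assumption 1, and let $\alpha,\beta\in[0,1)$, $\ell\in[0,\min\{\alpha,1-\alpha\})$, $\bar\ell\in[0,\min\{\beta,1-\beta\})$. Suppose there exist $\lambda\in(0,1)$ and a norm on $\mathbb R^2$ (with induced matrix norm $\|\cdot\|$) such that for every $n\in\mathbb N$, almost surely, $\|J_{\alpha+\ell\xi_n,\beta+\bar\ell\chi_n}\|\le\lambda$. Then there is $\delta_0>0$ such that every solution $(x_n,y_n)$ of $$x_{n+1}=x_n[(1-\alpha-\ell\xi_{n+1})e^{r-x_n-ay_n}+\alpha+\ell\xi_{n+1}],\quad y_{n+1}=y_n[(1-\beta-\bar\ell\chi_{n+1})e^{s-bx_n-y_n}+\beta+\bar\ell\chi_{n+1}]$$ with $(x_0,y_0)\in B(K,\delta_0)$ satisfies $\lim_{n\to\infty}(x_n,y_n)=K$ almost surely.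
   Context: $p=\frac{r-as}{1-ab}$, $q=\frac{s-br}{1-ab}$, $K=(p,q)$; $J_{\alpha,\beta}=\begin{pmatrix}1-(1-\alpha)p & -a(1-\alpha)p\\ -b(1-\beta)q & 1-(1-\beta)q\end{pmatrix}$. Assumption 1: on a probability space, $(\xi_n)_{n\in\mathbb N}$ and $(\chi_n)_{n\in\mathbb N}$ are mutually independent sequences, each consisting of independent identically distributed random variables, with $|\xi_n|\le1$, $|\chi_n|\le1$ for all $n$. *)

theory Defs
  imports "HOL-Probability.Probability"
begin

definition pK :: "real \<Rightarrow> real \<Rightarrow> real \<Rightarrow> real \<Rightarrow> real" where
  "pK a b r s = (r - a * s) / (1 - a * b)"

definition qK :: "real \<Rightarrow> real \<Rightarrow> real \<Rightarrow> real \<Rightarrow> real" where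
  "qK a b r s = (s - b * r) / (1 - a * b)"

definition Jmat :: "real \<Rightarrow> real \<Rightarrow> real \<Rightarrow> real \<Rightarrow> real \<Rightarrow> real \<Rightarrow> real^2^2" where
  "Jmat a b r s al be =
     (let p = pK a b r s; q = qK a b r s in
      vector [vector [1 - (1 - al) * p, - a * (1 - al) * p],
              vector [- b * (1 - be) * q, 1 - (1 - be) * q]])"

definition is_norm_R2 :: "(real^2 \<Rightarrow> real) \<Rightarrow> bool" where
  "is_norm_R2 N \<longleftrightarrow>
     (\<forall>x. 0 \<le> N x) \<and> (\<forall>x. N x = 0 \<longleftrightarrow> x = 0) \<and>
     (\<forall>c x. N (c *\<^sub>R x) = \<bar>c\<bar> * N x) \<and>
     (\<forall>x y. N (x + y) \<le> N x + N y)"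

definition induced_norm :: "(real^2 \<Rightarrow> real) \<Rightarrow> real^2^2 \<Rightarrow> real" where
  "induced_norm N A = (SUP x\<in>{x. N x = 1}. N (A *v x))"

primrec traj :: "real \<Rightarrow> real \<Rightarrow> real \<Rightarrow> real \<Rightarrow> real \<Rightarrow> real \<Rightarrow> real \<Rightarrow> real
   \<Rightarrow> (nat \<Rightarrow> real) \<Rightarrow> (nat \<Rightarrow> real) \<Rightarrow> real \<Rightarrow> real \<Rightarrow> nat \<Rightarrow> real \<times> real" where
  "traj a b r s al be l l' xi chi x0 y0 0 = (x0, y0)"
| "traj a b r s al be l l' xi chi x0 y0 (Suc n) =
     (let (x, y) = traj a b r s al be l l' xi chi x0 y0 n in
      (x * ((1 - al - l * xi (Suc n)) * exp (r - x - a * y) + al + l * xi (Suc n)),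
       y * ((1 - be - l' * chi (Suc n)) * exp (s - b * x - y) + be + l' * chi (Suc n))))"

end

theory Submission
  imports Defs
begin


lemma vec2_eq: "(z::real^2) = vector[z$1, z$2]"
  by (simp add: vec_eq_iff forall_2)

lemma vec2_decomp: "(z::real^2) = (z$1) *\<^sub>R vector[1,0] + (z$2) *\<^sub>R vector[0,1]"
  by (simp add: vec_eq_iff forall_2)

lemma isn0: "is_norm_R2 N \<Longrightarrow> N 0 = 0"
  unfolding is_norm_R2_def by blast

lemma isn_pos: "is_norm_R2 N \<Longrightarrow> 0 \<le> N x"
  unfolding is_norm_R2_def by blast

lemma isn_scale: "is_norm_R2 N \<Longrightarrow> N (c *\<^sub>R x) = \<bar>c\<bar> * N x"
  unfolding is_norm_R2_def by blast

lemma isn_tri: "is_norm_R2 N \<Longrightarrow> N (x + y) \<le> N x + N y"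
  unfolding is_norm_R2_def by blast

lemma isn_nz: "is_norm_R2 N \<Longrightarrow> x \<noteq> 0 \<Longrightarrow> 0 < N x"
  unfolding is_norm_R2_def by (metis less_eq_real_def)

lemma isn_minus: "is_norm_R2 N \<Longrightarrow> N (x - y) = N (y - x)"
proof -
  assume n: "is_norm_R2 N"
  have "x - y = (-1) *\<^sub>R (y - x)" by simp
  then show ?thesis using isn_scale[OF n, of "-1" "y - x"] by simp
qed

lemma isn_diff: "is_norm_R2 N \<Longrightarrow> \<bar>N x - N y\<bar> \<le> N (x - y)"
proof -
  assume n: "is_norm_R2 N"
  have "N x \<le> N (x - y) + N y" using isn_tri[OF n, of "x - y" y] by simp
  moreover have "N y \<le> N (y - x) + N x" using isn_tri[OF n, of "y - x" x] by simp
  ultimately show ?thesis using isn_minus[OF n, of x y] by linarith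
qed

definition CN :: "(real^2 \<Rightarrow> real) \<Rightarrow> real" where
  "CN N = N (vector[1,0]) + N (vector[0,1])"

lemma CN_pos: "is_norm_R2 N \<Longrightarrow> 0 < CN N"
proof -
  assume n: "is_norm_R2 N"
  have "(vector[1,0] :: real^2) \<noteq> 0"
    by (metis vector_2(1) zero_index zero_neq_one)
  then show ?thesis unfolding CN_def using isn_nz[OF n] isn_pos[OF n]
    by (simp add: add_pos_nonneg)
qed

lemma N_upper: "is_norm_R2 N \<Longrightarrow> N z \<le> CN N * (\<bar>z$1\<bar> + \<bar>z$2\<bar>)"
proof -
  assume n: "is_norm_R2 N"
  have "N z \<le> N ((z$1) *\<^sub>R vector[1,0]) + N ((z$2) *\<^sub>R vector[0,1])"
    by (subst vec2_decomp) (rule isn_tri[OF n])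
  also have "\<dots> = \<bar>z$1\<bar> * N (vector[1,0]) + \<bar>z$2\<bar> * N (vector[0,1])"
    using isn_scale[OF n] by simp
  also have "\<dots> \<le> CN N * (\<bar>z$1\<bar> + \<bar>z$2\<bar>)"
    unfolding CN_def using isn_pos[OF n, of "vector[1,0]"] isn_pos[OF n, of "vector[0,1]"]
    by (simp add: algebra_simps add_mono mult_left_mono)
  finally show ?thesis .
qed

lemma N_lower: assumes n: "is_norm_R2 N"
  shows "\<exists>m>0. \<forall>z. m * (\<bar>z$1\<bar> + \<bar>z$2\<bar>) \<le> N z"
proof -
  define f where "f = (\<lambda>z::real\<times>real. N (vector[fst z, snd z]))"
  define S where "S = {z::real\<times>real. \<bar>fst z\<bar> + \<bar>snd z\<bar> = 1}"
  have cl: "closed S" unfolding S_def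
    by (intro closed_Collect_eq continuous_intros)
  have "S \<subseteq> cball 0 1"
    unfolding S_def
  proof (clarsimp simp: dist_norm)
    fix u v :: real assume "\<bar>u\<bar> + \<bar>v\<bar> = 1"
    then show "norm (-u, -v) \<le> 1" using norm_Pair_le[of "-u" "-v"] by simp
  qed
  then have "bounded S" using bounded_cball bounded_subset by blast
  with cl have cS: "compact S" using compact_eq_bounded_closed by blast
  have ne: "S \<noteq> {}" unfolding S_def by (metis (mono_tags, lifting) empty_Collect_eq abs_1 abs_zero add.right_neutral fst_conv snd_conv)
  have lip: "(2 * CN N)-lipschitz_on S f"
  proof (rule lipschitz_onI)
    fix x y assume "x \<in> S" "y \<in> S"
    have "dist (f x) (f y) \<le> N (vector[fst x, snd x] - vector[fst y, snd y])"
      unfolding f_def dist_real_def by (rule isn_diff[OF n])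
    also have "\<dots> \<le> CN N * (\<bar>fst x - fst y\<bar> + \<bar>snd x - snd y\<bar>)"
      using N_upper[OF n, of "vector[fst x, snd x] - vector[fst y, snd y]"] by simp
    also have "\<dots> \<le> CN N * (2 * dist x y)"
      using dist_fst_le[of x y] dist_snd_le[of x y] CN_pos[OF n]
      by (intro mult_left_mono) (auto simp: dist_real_def)
    finally show "dist (f x) (f y) \<le> 2 * CN N * dist x y" by simp
  next
    show "0 \<le> 2 * CN N" using CN_pos[OF n] by simp
  qed
  then have "continuous_on S f" by (rule lipschitz_on_continuous_on)
  from continuous_attains_inf[OF cS ne this] obtain z0 where z0: "z0 \<in> S" "\<forall>y\<in>S. f z0 \<le> f y" by blast
  have "vector[fst z0, snd z0] \<noteq> (0::real^2)"
  proof
    assume "vector[fst z0, snd z0] = (0::real^2)"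
    then have "fst z0 = 0" "snd z0 = 0"
      by (metis vector_2(1) zero_index, metis vector_2(2) zero_index)
    then show False using z0(1) unfolding S_def by simp
  qed
  then have mpos: "0 < f z0" unfolding f_def by (rule isn_nz[OF n])
  show ?thesis
  proof (intro exI[of _ "f z0"] conjI allI mpos)
    fix z :: "real^2"
    define t where "t = \<bar>z$1\<bar> + \<bar>z$2\<bar>"
    show "f z0 * (\<bar>z$1\<bar> + \<bar>z$2\<bar>) \<le> N z"
    proof (cases "t = 0")
      case True
      then have "\<bar>z$1\<bar> + \<bar>z$2\<bar> = 0" unfolding t_def .
      then have "z$1 = 0" "z$2 = 0" by linarith+
      then show ?thesis using isn_pos[OF n, of z] by simp
    next
      case False
      then have tp: "t > 0" unfolding t_def by simp
      have "(z$1 / t, z$2 / t) \<in> S" unfolding S_def t_def using False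
        by (simp add: t_def abs_divide add_divide_distrib[symmetric])
      then have "f z0 \<le> N (vector[z$1/t, z$2/t])" using z0(2) unfolding f_def by force
      also have "vector[z$1/t, z$2/t] = (1/t) *\<^sub>R z"
        by (simp add: vec_eq_iff forall_2)
      also have "N ((1/t) *\<^sub>R z) = N z / t" using isn_scale[OF n] tp by simp
      finally show ?thesis using tp unfolding t_def by (simp add: field_simps)
    qed
  qed
qed

lemma mv2: "((A::real^2^2) *v x) $ 1 = A$1$1 * x$1 + A$1$2 * x$2"
           "((A::real^2^2) *v x) $ 2 = A$2$1 * x$1 + A$2$2 * x$2"
  by (simp_all add: matrix_vector_mult_def sum_2)

lemma lin2_bound: "\<bar>a11 * y1 + a12 * y2\<bar> + \<bar>a21 * y1 + a22 * y2\<bar>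
   \<le> (\<bar>a11\<bar> + \<bar>a12\<bar> + \<bar>a21\<bar> + \<bar>a22\<bar>) * (\<bar>y1\<bar> + \<bar>y2\<bar>::real)"
proof -
  have h: "\<bar>c * y\<bar> \<le> \<bar>c\<bar> * (\<bar>y1\<bar> + \<bar>y2\<bar>)" if "\<bar>y\<bar> \<le> \<bar>y1\<bar> + \<bar>y2\<bar>" for c y :: real
    using that by (simp add: abs_mult mult_left_mono)
  have "\<bar>a11 * y1 + a12 * y2\<bar> + \<bar>a21 * y1 + a22 * y2\<bar> \<le>
     \<bar>a11 * y1\<bar> + \<bar>a12 * y2\<bar> + \<bar>a21 * y1\<bar> + \<bar>a22 * y2\<bar>" by linarith
  also have "\<dots> \<le> \<bar>a11\<bar> * (\<bar>y1\<bar> + \<bar>y2\<bar>) + \<bar>a12\<bar> * (\<bar>y1\<bar> + \<bar>y2\<bar>)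
      + \<bar>a21\<bar> * (\<bar>y1\<bar> + \<bar>y2\<bar>) + \<bar>a22\<bar> * (\<bar>y1\<bar> + \<bar>y2\<bar>)"
    by (intro add_mono h) auto
  finally show ?thesis by (simp add: algebra_simps)
qed

lemma ind_bound: assumes n: "is_norm_R2 N"
  shows "N (A *v x) \<le> induced_norm N A * N x"
proof -
  obtain m where m: "m > 0" "\<And>z. m * (\<bar>z$1\<bar> + \<bar>z$2\<bar>) \<le> N z" using N_lower[OF n] by blast
  define S where "S = \<bar>A$1$1\<bar> + \<bar>A$1$2\<bar> + \<bar>A$2$1\<bar> + \<bar>A$2$2\<bar>"
  have S0: "S \<ge> 0" unfolding S_def by simp
  have bd: "N (A *v y) \<le> CN N * S / m" if "N y = 1" for y
  proof -
    have "N (A *v y) \<le> CN N * (\<bar>(A *v y)$1\<bar> + \<bar>(A *v y)$2\<bar>)" by (rule N_upper[OF n])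
    also have "\<dots> \<le> CN N * (S * (\<bar>y$1\<bar> + \<bar>y$2\<bar>))"
      unfolding mv2 S_def using CN_pos[OF n] by (intro mult_left_mono lin2_bound) auto
    also have "\<bar>y$1\<bar> + \<bar>y$2\<bar> \<le> 1 / m" using m that by (simp add: field_simps) (metis mult.commute)
    then have "CN N * (S * (\<bar>y$1\<bar> + \<bar>y$2\<bar>)) \<le> CN N * (S * (1/m))"
      using CN_pos[OF n] S0 by (intro mult_left_mono) auto
    finally show ?thesis by simp
  qed
  then have bdd: "bdd_above ((\<lambda>y. N (A *v y)) ` {y. N y = 1})" by (auto intro!: bdd_aboveI)
  show ?thesis
  proof (cases "x = 0")
    case True then show ?thesis using isn0[OF n] by simp
  next
    case False
    define t where "t = N x"
    have tp: "t > 0" unfolding t_def using isn_nz[OF n False] .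
    have "N ((1/t) *\<^sub>R x) = 1" using isn_scale[OF n] tp unfolding t_def by simp
    then have "N (A *v ((1/t) *\<^sub>R x)) \<le> induced_norm N A"
      unfolding induced_norm_def by (intro cSUP_upper bdd) auto
    also have "N (A *v ((1/t) *\<^sub>R x)) = N (A *v x) / t"
      using isn_scale[OF n] tp by (simp add: matrix_vector_mult_scaleR)
    finally show ?thesis using tp unfolding t_def by (simp add: field_simps)
  qed
qed

lemma exp_quad: assumes "\<bar>t\<bar> \<le> (1::real)" shows "\<bar>exp t - 1 - t\<bar> \<le> t^2"
proof (cases "t \<ge> 0")
  case True
  have "1 + t \<le> exp t" by (rule exp_ge_add_one_self)
  moreover have "0 \<le> t^2" by simp
  ultimately show ?thesis using exp_bound[of t] assms True unfolding abs_le_iff by linarith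
next
  case False
  define u where "u = -t"
  have u: "u > 0" "u \<le> 1" using False assms unfolding u_def by auto
  have l: "1 + u + u^2/2 \<le> exp u" by (rule exp_lower_Taylor_quadratic) (use u in auto)
  have "exp t = 1 / exp u" unfolding u_def by (simp add: exp_minus field_simps)
  also have "\<dots> \<le> 1 / (1 + u + u^2/2)"
  proof -
    have "0 < 1 + u + u^2/2" using u by (auto intro: add_pos_nonneg)
    then show ?thesis using l by (intro divide_left_mono) auto
  qed
  also have "\<dots> \<le> 1 - u + u^2"
  proof -
    have pos: "1 + u + u^2/2 > 0" using u by (auto intro: add_pos_nonneg)
    have "(1 - u + u^2) * (1 + u + u^2/2) = 1 + u^2/2 + u^3/2 + u^4/2"
      by (simp add: field_simps power2_eq_square power3_eq_cube power4_eq_xxxx)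
    also have "\<dots> \<ge> 1" using u by simp
    finally show ?thesis using pos by (simp add: field_simps)
  qed
  finally have "exp t \<le> 1 + t + t^2" unfolding u_def by simp
  moreover have "1 + t \<le> exp t" by (rule exp_ge_add_one_self)
  moreover have "0 \<le> t^2" by simp
  ultimately show ?thesis unfolding abs_le_iff by linarith
qed

lemma rem_bound:
  fixes p u w al sm :: real
  assumes "\<bar>w\<bar> \<le> sm" "\<bar>u\<bar> \<le> sm" "sm \<le> 1" "0 \<le> al" "al \<le> 1" "0 < p"
  shows "\<bar>(p + u) * ((1 - al) * exp (- w) + al) - p - (u - (1 - al) * p * w)\<bar> \<le> (p + 2) * sm^2"
proof -
  have w1: "\<bar>w\<bar> \<le> 1" using assms by linarith
  have e1: "\<bar>exp (-w) - 1 + w\<bar> \<le> w^2" using exp_quad[of "-w"] w1 by simp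
  have w2: "w^2 \<le> sm^2" using assms(1) by (metis abs_ge_zero power2_abs power_mono)
  have w3: "w^2 \<le> sm" using w2 assms(3) assms(1)
    by (smt (verit) abs_ge_zero mult_left_le_one_le power2_abs power2_eq_square)
  have e2: "\<bar>exp (-w) - 1\<bar> \<le> 2 * sm" using e1 assms(1) w3 by linarith
  have eq: "(p + u) * ((1 - al) * exp (- w) + al) - p - (u - (1 - al) * p * w)
     = (1 - al) * (p * (exp (-w) - 1 + w) + u * (exp (-w) - 1))" by (simp add: algebra_simps)
  have "\<bar>(1 - al) * (p * (exp (-w) - 1 + w) + u * (exp (-w) - 1))\<bar>
      \<le> \<bar>p * (exp (-w) - 1 + w) + u * (exp (-w) - 1)\<bar>"
    using assms(4,5) by (simp add: abs_mult mult_left_le_one_le)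
  also have "\<dots> \<le> p * \<bar>exp (-w) - 1 + w\<bar> + \<bar>u\<bar> * \<bar>exp (-w) - 1\<bar>"
    using assms(6) by (metis abs_mult abs_of_pos abs_triangle_ineq)
  also have "\<dots> \<le> p * sm^2 + sm * (2 * sm)"
    using e1 w2 e2 assms by (intro add_mono mult_mono mult_left_mono) auto
  also have "\<dots> = (p + 2) * sm^2" by (simp add: algebra_simps power2_eq_square)
  finally show ?thesis using eq by simp
qed

lemma Jmat_mv: "Jmat a b r s al be *v vector[u,v] =
   vector[u - (1-al)*pK a b r s*(u + a* v), v - (1-be)*qK a b r s*(b*u+v)]"
proof -
  have J: "Jmat a b r s al be $1$1 = 1 - (1 - al) * pK a b r s"
     "Jmat a b r s al be $1$2 = - a * (1 - al) * pK a b r s"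
     "Jmat a b r s al be $2$1 = - b * (1 - be) * qK a b r s"
     "Jmat a b r s al be $2$2 = 1 - (1 - be) * qK a b r s"
    by (simp_all add: Jmat_def Let_def)
  show ?thesis
    by (simp only: vec_eq_iff forall_2 mv2 J vector_2) (simp add: algebra_simps)
qed

lemma step:
  assumes n: "is_norm_R2 N" and m: "m > 0" "\<And>z. m * (\<bar>z$1\<bar> + \<bar>z$2\<bar>) \<le> N z"
    and pq: "pK a b r s = p" "qK a b r s = q" "0 < p" "0 < q" "0 \<le> a" "a \<le> 1" "0 \<le> b" "b \<le> 1"
      "r = p + a*q" "s = b*p + q"
    and al: "0 \<le> al" "al \<le> 1" "0 \<le> be" "be \<le> 1"
    and ind: "induced_norm N (Jmat a b r s al be) \<le> lam"
    and eps: "0 < eps" "eps \<le> 1" "CN N * (p + q + 4) * eps \<le> (1 - lam) * m / 2"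
    and uv: "\<bar>u\<bar> + \<bar>v\<bar> \<le> eps"
  shows "N (vector[(p+u)*((1-al)*exp(r-(p+u)-a*(q+v))+al) - p,
                   (q+v)*((1-be)*exp(s-b*(p+u)-(q+v))+be) - q]) \<le> (1 + lam)/2 * N (vector[u,v])"
proof -
  define sm where "sm = \<bar>u\<bar> + \<bar>v\<bar>"
  define N0 where "N0 = N (vector[u,v])"
  have lam1: "lam < 1"
  proof -
    have "0 < CN N * (p + q + 4) * eps" using CN_pos[OF n] pq eps by simp
    then have "0 < (1 - lam) * m" using eps by linarith
    then show ?thesis using m by (simp add: zero_less_mult_iff)
  qed
  have smN: "m * sm \<le> N0" unfolding sm_def N0_def using m(2)[of "vector[u,v]"] by simp
  have sm1: "sm \<le> 1" "sm \<le> eps" "0 \<le> sm" using uv eps unfolding sm_def by auto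
  define x' where "x' = (p+u)*((1-al)*exp(r-(p+u)-a*(q+v))+al)"
  define y' where "y' = (q+v)*((1-be)*exp(s-b*(p+u)-(q+v))+be)"
  define R1 where "R1 = x' - p - (u - (1-al)*p*(u + a* v))"
  define R2 where "R2 = y' - q - (v - (1-be)*q*(v + b*u))"
  have ex1: "r-(p+u)-a*(q+v) = - (u + a* v)" using pq by (simp add: algebra_simps)
  have ex2: "s-b*(p+u)-(q+v) = - (v + b*u)" using pq by (simp add: algebra_simps)
  have "\<bar>a * v\<bar> \<le> \<bar>v\<bar>" using pq by (simp add: abs_mult mult_left_le_one_le)
  then have w1: "\<bar>u + a * v\<bar> \<le> sm" unfolding sm_def using abs_triangle_ineq[of u "a * v"] by linarith
  have "\<bar>b*u\<bar> \<le> \<bar>u\<bar>" using pq by (simp add: abs_mult mult_left_le_one_le)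
  then have w2: "\<bar>v + b*u\<bar> \<le> sm" unfolding sm_def using abs_triangle_ineq[of v "b*u"] by linarith
  have R1e: "R1 = (p + u) * ((1 - al) * exp (- (u + a * v)) + al) - p - (u - (1 - al) * p * (u + a * v))"
    by (simp only: R1_def x'_def ex1)
  have R1b: "\<bar>R1\<bar> \<le> (p + 2) * sm^2"
    unfolding R1e by (rule rem_bound[OF w1 _ sm1(1) al(1,2) pq(3)]) (simp add: sm_def)
  have R2e: "R2 = (q + v) * ((1 - be) * exp (- (v + b * u)) + be) - q - (v - (1 - be) * q * (v + b * u))"
    by (simp only: R2_def y'_def ex2)
  have R2b: "\<bar>R2\<bar> \<le> (q + 2) * sm^2"
    unfolding R2e by (rule rem_bound[OF w2 _ sm1(1) al(3,4) pq(4)]) (simp add: sm_def)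
  have dec: "vector[x' - p, y' - q] = Jmat a b r s al be *v vector[u,v] + vector[R1, R2]"
    unfolding Jmat_mv pq(1,2) R1_def R2_def by (simp add: vec_eq_iff forall_2 algebra_simps)
  have "N (vector[x' - p, y' - q]) \<le> N (Jmat a b r s al be *v vector[u,v]) + N (vector[R1, R2])"
    unfolding dec by (rule isn_tri[OF n])
  also have "\<dots> \<le> lam * N0 + CN N * (\<bar>R1\<bar> + \<bar>R2\<bar>)"
  proof (rule add_mono)
    show "N (Jmat a b r s al be *v vector[u,v]) \<le> lam * N0"
      unfolding N0_def using ind_bound[OF n] ind isn_pos[OF n, of "vector[u,v]"]
      by (meson mult_right_mono order_trans)
    show "N (vector[R1, R2]) \<le> CN N * (\<bar>R1\<bar> + \<bar>R2\<bar>)"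
      using N_upper[OF n, of "vector[R1,R2]"] by simp
  qed
  finally have fs1: "N (vector[x' - p, y' - q]) \<le> lam * N0 + CN N * (\<bar>R1\<bar> + \<bar>R2\<bar>)" .
  have "CN N * (\<bar>R1\<bar> + \<bar>R2\<bar>) \<le> CN N * ((p + q + 4) * sm^2)"
    using R1b R2b CN_pos[OF n] by (intro mult_left_mono) (auto simp: algebra_simps)
  also have "\<dots> = (CN N * (p + q + 4) * sm) * sm" by (simp add: power2_eq_square)
  also have "\<dots> \<le> (CN N * (p + q + 4) * eps) * sm"
    using sm1 CN_pos[OF n] pq by (intro mult_right_mono mult_left_mono) auto
  also have "\<dots> \<le> ((1 - lam) * m / 2) * sm" using eps sm1 by (intro mult_right_mono) auto
  also have "\<dots> = ((1 - lam) / 2) * (m * sm)" by simp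
  also have "\<dots> \<le> ((1 - lam) / 2) * N0" using lam1 smN by (intro mult_left_mono) auto
  finally have fs2: "CN N * (\<bar>R1\<bar> + \<bar>R2\<bar>) \<le> ((1 - lam) / 2) * N0" .
  have fin: "N (vector[x' - p, y' - q]) \<le> lam * N0 + (1 - lam) / 2 * N0" using fs1 fs2 by linarith
  have eqq: "lam * N0 + (1 - lam) / 2 * N0 = (1 + lam) / 2 * N0" by (simp add: field_simps)
  show ?thesis using fin eqq unfolding x'_def y'_def N0_def by linarith
qed

lemma step':
  assumes n: "is_norm_R2 N" and m: "m > 0" "\<And>z. m * (\<bar>z$1\<bar> + \<bar>z$2\<bar>) \<le> N z"
    and pq: "pK a b r s = p" "qK a b r s = q" "0 < p" "0 < q" "0 \<le> a" "a \<le> 1" "0 \<le> b" "b \<le> 1"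
      "r = p + a*q" "s = b*p + q"
    and al: "0 \<le> al" "al \<le> 1" "0 \<le> be" "be \<le> 1"
    and ind: "induced_norm N (Jmat a b r s al be) \<le> lam"
    and eps: "0 < eps" "eps \<le> 1" "CN N * (p + q + 4) * eps \<le> (1 - lam) * m / 2"
    and uv: "\<bar>x - p\<bar> + \<bar>y - q\<bar> \<le> eps"
  shows "N (vector[x*((1-al)*exp(r-x-a*y)+al) - p,
                   y*((1-be)*exp(s-b*x-y)+be) - q]) \<le> (1 + lam)/2 * N (vector[x - p, y - q])"
  using step[OF n m pq al ind eps uv] by simp

lemma traj_Suc': "traj a b r s al be l l' A B x0 y0 (Suc n) =
  (fst (traj a b r s al be l l' A B x0 y0 n) * ((1 - (al + l * A (Suc n))) * exp (r - fst (traj a b r s al be l l' A B x0 y0 n) - a * snd (traj a b r s al be l l' A B x0 y0 n)) + (al + l * A (Suc n))),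
   snd (traj a b r s al be l l' A B x0 y0 n) * ((1 - (be + l' * B (Suc n))) * exp (s - b * fst (traj a b r s al be l l' A B x0 y0 n) - snd (traj a b r s al be l l' A B x0 y0 n)) + (be + l' * B (Suc n))))"
  by (cases "traj a b r s al be l l' A B x0 y0 n") (simp add: algebra_simps)

lemma pathwise:
  assumes n: "is_norm_R2 N" and m: "m > 0" "\<And>z. m * (\<bar>z$1\<bar> + \<bar>z$2\<bar>) \<le> N z"
    and pq: "pK a b r s = p" "qK a b r s = q" "0 < p" "0 < q" "0 \<le> a" "a \<le> 1" "0 \<le> b" "b \<le> 1"
      "r = p + a*q" "s = b*p + q"
    and al: "\<And>n. 0 \<le> al + l * A n" "\<And>n. al + l * A n \<le> 1" "\<And>n. 0 \<le> be + l' * B n" "\<And>n. be + l' * B n \<le> 1"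
    and ind: "\<And>n. induced_norm N (Jmat a b r s (al + l * A n) (be + l' * B n)) \<le> lam"
    and lam: "0 \<le> lam"
    and eps: "0 < eps" "eps \<le> 1" "CN N * (p + q + 4) * eps \<le> (1 - lam) * m / 2"
    and init: "N (vector[x0 - p, y0 - q]) \<le> m * eps"
  shows "(\<lambda>n. traj a b r s al be l l' A B x0 y0 n) \<longlonglongrightarrow> (p, q)"
proof -
  define T where "T = (\<lambda>n. traj a b r s al be l l' A B x0 y0 n)"
  define D where "D = (\<lambda>n. N (vector[fst (T n) - p, snd (T n) - q]))"
  define L where "L = (1 + lam) / 2"
  have lam1: "lam < 1"
  proof -
    have "0 < CN N * (p + q + 4) * eps" using CN_pos[OF n] pq eps by simp
    then have "0 < (1 - lam) * m" using eps by linarith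
    then show ?thesis using m by (simp add: zero_less_mult_iff)
  qed
  have L: "0 \<le> L" "L < 1" unfolding L_def using lam lam1 by auto
  have D0: "D 0 \<le> m * eps" unfolding D_def T_def using init by simp
  have sD: "\<bar>fst (T k) - p\<bar> + \<bar>snd (T k) - q\<bar> \<le> D k / m" for k
    using m(2)[of "vector[fst (T k) - p, snd (T k) - q]"] m(1) unfolding D_def by (simp add: field_simps)
  have Dn: "D n \<le> L ^ n * D 0" for n
  proof (induction n)
    case 0 then show ?case by simp
  next
    case (Suc n)
    have "L ^ n \<le> 1" using L by (simp add: power_le_one)
    moreover have "0 \<le> D 0" unfolding D_def using isn_pos[OF n] by simp
    ultimately have "D n \<le> D 0" using Suc.IH by (meson mult_left_le_one_le order_trans L(1) zero_le_power)
    then have "D n / m \<le> eps" using D0 m(1) by (simp add: field_simps)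
    then have uv: "\<bar>fst (T n) - p\<bar> + \<bar>snd (T n) - q\<bar> \<le> eps" using sD[of n] by linarith
    have "D (Suc n) \<le> L * D n"
      unfolding D_def L_def T_def traj_Suc'
      using step'[OF n m pq al(1,2,3,4)[of "Suc n"] ind[of "Suc n"] eps uv[unfolded T_def]] by simp
    also have "\<dots> \<le> L * (L ^ n * D 0)" using Suc.IH L by (intro mult_left_mono) auto
    finally show ?case by simp
  qed
  have g: "(\<lambda>n. L ^ n * D 0 / m) \<longlonglongrightarrow> 0"
    using L by (intro tendsto_divide_zero tendsto_mult_left_zero LIMSEQ_power_zero) auto
  have "(\<lambda>n. fst (T n) - p) \<longlonglongrightarrow> 0"
  proof (rule Lim_null_comparison[OF _ g], rule always_eventually, rule allI)
    fix k
    have "D k / m \<le> L ^ k * D 0 / m" using Dn[of k] m(1) by (simp add: divide_right_mono)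
    then show "norm (fst (T k) - p) \<le> L ^ k * D 0 / m" using sD[of k] by simp
  qed
  then have f: "(\<lambda>n. fst (T n)) \<longlonglongrightarrow> p" by (rule LIM_zero_cancel)
  have "(\<lambda>n. snd (T n) - q) \<longlonglongrightarrow> 0"
  proof (rule Lim_null_comparison[OF _ g], rule always_eventually, rule allI)
    fix k
    have "D k / m \<le> L ^ k * D 0 / m" using Dn[of k] m(1) by (simp add: divide_right_mono)
    then show "norm (snd (T k) - q) \<le> L ^ k * D 0 / m" using sD[of k] by simp
  qed
  then have s: "(\<lambda>n. snd (T n)) \<longlonglongrightarrow> q" by (rule LIM_zero_cancel)
  from tendsto_Pair[OF f s] show ?thesis unfolding T_def by simp
qed


theorem mainTheorem11:
  fixes M :: "'w measure"
    and xi chi :: "nat \<Rightarrow> 'w \<Rightarrow> real"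
    and a b r s al be l l' lam :: real
    and N :: "real^2 \<Rightarrow> real"
  assumes "prob_space M"
    and "\<And>n. xi n \<in> borel_measurable M" and "\<And>n. chi n \<in> borel_measurable M"
    and "prob_space.indep_vars M (\<lambda>_. borel)
           (\<lambda>i. case i of Inl n \<Rightarrow> xi n | Inr n \<Rightarrow> chi n) (UNIV :: (nat + nat) set)"
    and "\<And>n. distr M borel (xi n) = distr M borel (xi 0)"
    and "\<And>n. distr M borel (chi n) = distr M borel (chi 0)"
    and "\<And>n w. w \<in> space M \<Longrightarrow> \<bar>xi n w\<bar> \<le> 1"
    and "\<And>n w. w \<in> space M \<Longrightarrow> \<bar>chi n w\<bar> \<le> 1"
    and "0 < a" "a < 1" "0 < b" "b < 1" "r > a * s" "s > b * r"
    and "0 \<le> al" "al < 1" "0 \<le> be" "be < 1"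
    and "0 \<le> l" "l < min al (1 - al)" "0 \<le> l'" "l' < min be (1 - be)"
    and "0 < lam" "lam < 1"
    and "is_norm_R2 N"
    and "\<And>n. AE w in M. induced_norm N (Jmat a b r s (al + l * xi n w) (be + l' * chi n w)) \<le> lam"
  shows "\<exists>\<delta>0>0. \<forall>x0 y0. dist (x0, y0) (pK a b r s, qK a b r s) < \<delta>0 \<longrightarrow>
           (AE w in M. (\<lambda>n. traj a b r s al be l l' (\<lambda>k. xi k w) (\<lambda>k. chi k w) x0 y0 n)
                         \<longlonglongrightarrow> (pK a b r s, qK a b r s))"
proof -
  note n = assms(25)
  define p where "p = pK a b r s"
  define q where "q = qK a b r s"
  have "a * b < a * 1" using assms(9,12) by (intro mult_strict_left_mono) auto
  then have ab: "0 < 1 - a * b" using assms(10) by simp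
  have pp: "0 < p" unfolding p_def pK_def using ab assms(13) by simp
  have qp: "0 < q" unfolding q_def qK_def using ab assms(14) by simp
  have rr: "r = p + a * q"
  proof -
    have "p + a * q = ((r - a * s) + a * (s - b * r)) / (1 - a * b)"
      unfolding p_def q_def pK_def qK_def by (simp add: add_divide_distrib)
    also have "(r - a * s) + a * (s - b * r) = r * (1 - a * b)" by (simp add: algebra_simps)
    finally show ?thesis using ab by simp
  qed
  have ss: "s = b * p + q"
  proof -
    have "b * p + q = (b * (r - a * s) + (s - b * r)) / (1 - a * b)"
      unfolding p_def q_def pK_def qK_def by (simp add: add_divide_distrib)
    also have "b * (r - a * s) + (s - b * r) = s * (1 - a * b)" by (simp add: algebra_simps)
    finally show ?thesis using ab by simp
  qed
  obtain m where m: "m > 0" "\<And>z. m * (\<bar>z$1\<bar> + \<bar>z$2\<bar>) \<le> N z" using N_lower[OF n] by blast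
  have C: "0 < CN N" by (rule CN_pos[OF n])
  define eps where "eps = min 1 ((1 - lam) * m / (2 * CN N * (p + q + 4)))"
  have epos: "0 < eps" unfolding eps_def using assms(24) m C pp qp by simp
  have e1: "eps \<le> 1" unfolding eps_def by simp
  have e3: "CN N * (p + q + 4) * eps \<le> (1 - lam) * m / 2"
  proof -
    have "eps \<le> (1 - lam) * m / (2 * CN N * (p + q + 4))" unfolding eps_def by simp
    moreover have "0 < 2 * CN N * (p + q + 4)" using C pp qp by simp
    ultimately have "2 * CN N * (p + q + 4) * eps \<le> (1 - lam) * m"
      by (simp add: pos_le_divide_eq mult.commute)
    then show ?thesis by simp
  qed
  define d where "d = m * eps / (2 * CN N)"
  have dpos: "0 < d" unfolding d_def using m epos C by simp
  show ?thesis
  proof (intro exI[of _ d] conjI allI impI dpos)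
    fix x0 y0 :: real
    assume dist: "dist (x0, y0) (pK a b r s, qK a b r s) < d"
    have dx: "\<bar>x0 - p\<bar> \<le> dist (x0, y0) (p, q)" using dist_fst_le[of "(x0,y0)" "(p,q)"] by (simp add: dist_real_def)
    have dy: "\<bar>y0 - q\<bar> \<le> dist (x0, y0) (p, q)" using dist_snd_le[of "(x0,y0)" "(p,q)"] by (simp add: dist_real_def)
    have "N (vector[x0 - p, y0 - q]) \<le> CN N * (\<bar>x0 - p\<bar> + \<bar>y0 - q\<bar>)"
      using N_upper[OF n, of "vector[x0 - p, y0 - q]"] by simp
    also have "\<dots> \<le> CN N * (2 * d)" using dx dy dist C unfolding p_def q_def
      by (intro mult_left_mono) auto
    also have "\<dots> = m * eps" unfolding d_def using C by simp
    finally have init: "N (vector[x0 - p, y0 - q]) \<le> m * eps" .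
    have ae1: "AE w in M. \<forall>n. induced_norm N (Jmat a b r s (al + l * xi n w) (be + l' * chi n w)) \<le> lam"
      using assms(26) by (simp add: AE_all_countable)
    show "AE w in M. (\<lambda>n. traj a b r s al be l l' (\<lambda>k. xi k w) (\<lambda>k. chi k w) x0 y0 n)
                         \<longlonglongrightarrow> (pK a b r s, qK a b r s)"
      using ae1 AE_space
    proof eventually_elim
      case (elim w)
      have bx: "\<bar>l * xi k w\<bar> \<le> l" for k
        using assms(7)[OF elim(2), of k] assms(19) by (simp add: abs_mult mult_right_le_one_le)
      have by': "\<bar>l' * chi k w\<bar> \<le> l'" for k
        using assms(8)[OF elim(2), of k] assms(21) by (simp add: abs_mult mult_right_le_one_le)
      have lb: "l \<le> al" "l \<le> 1 - al" "l' \<le> be" "l' \<le> 1 - be" using assms(20,22) by auto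
      show ?case unfolding p_def[symmetric] q_def[symmetric]
      proof (rule pathwise[OF n m p_def[symmetric] q_def[symmetric] pp qp _ _ _ _ rr ss])
        show "0 \<le> a" "a \<le> 1" "0 \<le> b" "b \<le> 1" using assms(9-12) by auto
        show "0 \<le> al + l * xi k w" "al + l * xi k w \<le> 1" for k using bx[of k] lb by (auto simp: abs_le_iff)
        show "0 \<le> be + l' * chi k w" "be + l' * chi k w \<le> 1" for k using by'[of k] lb by (auto simp: abs_le_iff)
        show "induced_norm N (Jmat a b r s (al + l * xi k w) (be + l' * chi k w)) \<le> lam" for k
          using elim(1) by blast
        show "0 \<le> lam" using assms(23) by simp
      qed (use epos e1 e3 init in auto)
    qed
  qed
qed

end
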